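(* Let $0<p<1$. Let $X_1,X_2,\ldots$ be i.i.d. random variables with values in $\{0,1,a\}$ such that $P(X_1=a)=p$ and $P(X_1=0)=P(X_1=1)=\frac{1-p}{2}$. Let $Y_1,Y_2,\ldots$ be i.i.d. Bernoulli random variables with parameter $1/2$ (values in $\{0,1\}$), independent of $(X_i)_{i\in\mathbb{N}}$. Let $L_n$ be the length of a longest common subsequence of $X_1X_2\ldots X_n$ and $Y_1Y_2\ldots Y_n$. Then there exists a constant $k>0$, not depending on $n$, such that for all $n\in\mathbb{N}$, $$\mathrm{Var}[L_n]\geq k\cdot n.$$
   Context: A common subsequence of two finite words is a word that is a subsequence (not necessarily contiguous) of both. *)

theory Defs
  imports "HOL-Probability.Probability" "HOL-Library.Sublist"
begin

datatype letter = Zero | One | A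

definition common_subseq :: "'a list \<Rightarrow> 'a list \<Rightarrow> 'a list \<Rightarrow> bool" where
  "common_subseq zs xs ys \<longleftrightarrow> subseq zs xs \<and> subseq zs ys"

definition lcs_length :: "'a list \<Rightarrow> 'a list \<Rightarrow> nat" where
  "lcs_length xs ys = Max (length ` {zs. common_subseq zs xs ys})"

end

theory Submission
  imports Defs
begin


lemma lcs_fin: "finite (length ` {zs. common_subseq zs xs ys})"
proof -
  have "length ` {zs. common_subseq zs xs ys} \<subseteq> {..length xs}"
    by (auto simp: common_subseq_def dest: list_emb_length)
  then show ?thesis using finite_subset by blast
qed

lemma lcs_ge: "common_subseq zs xs ys \<Longrightarrow> length zs \<le> lcs_length xs ys"
  unfolding lcs_length_def using lcs_fin by (intro Max_ge) auto

lemma lcs_ex: "\<exists>zs. common_subseq zs xs ys \<and> length zs = lcs_length xs ys"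
proof -
  have "common_subseq [] xs ys" by (simp add: common_subseq_def)
  then have "length ` {zs. common_subseq zs xs ys} \<noteq> {}" by blast
  from Max_in[OF lcs_fin this] show ?thesis unfolding lcs_length_def by auto
qed

lemma lcs_le1: "lcs_length xs ys \<le> length xs"
  using lcs_ex[of xs ys] by (auto simp: common_subseq_def dest: list_emb_length)

lemma lcs_sym: "lcs_length xs ys = lcs_length ys xs"
proof -
  have "lcs_length xs ys \<le> lcs_length ys xs" for xs ys :: "'a list"
  proof -
    obtain zs where "common_subseq zs xs ys" "length zs = lcs_length xs ys" using lcs_ex by blast
    then show ?thesis using lcs_ge[of zs ys xs] by (auto simp: common_subseq_def)
  qed
  then show ?thesis by (simp add: le_antisym)
qed

lemma lcs_mono2: "subseq ys ys' \<Longrightarrow> lcs_length xs ys \<le> lcs_length xs ys'"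
proof -
  assume a: "subseq ys ys'"
  obtain zs where "common_subseq zs xs ys" "length zs = lcs_length xs ys" using lcs_ex by blast
  then show ?thesis using lcs_ge[of zs xs ys'] a by (auto simp: common_subseq_def intro: subseq_order.trans)
qed

lemma lcs_mono1: "subseq xs xs' \<Longrightarrow> lcs_length xs ys \<le> lcs_length xs' ys"
  using lcs_mono2[of xs xs' ys] by (simp add: lcs_sym)

lemma subseq_Cons_first:
  "subseq (q#zs) V \<longleftrightarrow> q \<in> set V \<and> subseq zs (tl (dropWhile (\<lambda>x. x \<noteq> q) V))"
  by (induction V) auto

lemma subseq_Cons_right: "subseq zs (q#U) \<longleftrightarrow> subseq zs U \<or> (\<exists>zs'. zs = q#zs' \<and> subseq zs' U)"
  by (cases zs) (auto intro: subseq_Cons')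

lemma lcs_cons: "lcs_length (q#U) V = max (lcs_length U V)
   (if q \<in> set V then Suc (lcs_length U (tl (dropWhile (\<lambda>x. x \<noteq> q) V))) else 0)"
proof (rule le_antisym)
  obtain zs where zs: "common_subseq zs (q#U) V" "length zs = lcs_length (q#U) V"
    using lcs_ex by blast
  show "lcs_length (q#U) V \<le> max (lcs_length U V)
   (if q \<in> set V then Suc (lcs_length U (tl (dropWhile (\<lambda>x. x \<noteq> q) V))) else 0)"
  proof (cases "subseq zs U")
    case True
    then have "length zs \<le> lcs_length U V" using zs by (intro lcs_ge) (auto simp: common_subseq_def)
    then show ?thesis using zs by auto
  next
    case False
    then obtain zs' where "zs = q#zs'" "subseq zs' U" using zs
      by (auto simp: common_subseq_def subseq_Cons_right)
    moreover then have "q \<in> set V" "subseq zs' (tl (dropWhile (\<lambda>x. x \<noteq> q) V))"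
      using zs by (auto simp: common_subseq_def subseq_Cons_first)
    ultimately have "length zs' \<le> lcs_length U (tl (dropWhile (\<lambda>x. x \<noteq> q) V))"
      by (intro lcs_ge) (auto simp: common_subseq_def)
    then show ?thesis using zs \<open>zs = q#zs'\<close> \<open>q \<in> set V\<close> by auto
  qed
next
  have a: "lcs_length U V \<le> lcs_length (q#U) V" by (rule lcs_mono1) auto
  have b: "Suc (lcs_length U (tl (dropWhile (\<lambda>x. x \<noteq> q) V))) \<le> lcs_length (q#U) V" if "q \<in> set V"
  proof -
    obtain zs where zs: "common_subseq zs U (tl (dropWhile (\<lambda>x. x \<noteq> q) V))"
      "length zs = lcs_length U (tl (dropWhile (\<lambda>x. x \<noteq> q) V))" using lcs_ex by blast
    then have "common_subseq (q#zs) (q#U) V" using that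
      by (auto simp: common_subseq_def subseq_Cons_first)
    from lcs_ge[OF this] zs show ?thesis by simp
  qed
  show "max (lcs_length U V)
   (if q \<in> set V then Suc (lcs_length U (tl (dropWhile (\<lambda>x. x \<noteq> q) V))) else 0) \<le> lcs_length (q#U) V"
    using a b by auto
qed

lemma dw_split: "q \<notin> set P0 \<Longrightarrow> tl (dropWhile (\<lambda>x. x \<noteq> q) (P0 @ q # R)) = R"
  by (induction P0) auto

lemma dw_notin: "q \<notin> set P \<Longrightarrow> dropWhile (\<lambda>x. x \<noteq> q) (P @ W) = dropWhile (\<lambda>x. x \<noteq> q) W"
  by (induction P) auto

lemma lcs_cons_in: "q \<in> set V \<Longrightarrow> tl (dropWhile (\<lambda>x. x \<noteq> q) V) = R \<Longrightarrow>
  lcs_length (q#U) V = max (lcs_length U V) (Suc (lcs_length U R))"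
  by (simp add: lcs_cons)

lemma lcs_cons_notin: "q \<notin> set V \<Longrightarrow> lcs_length (q#U) V = lcs_length U V"
  by (simp add: lcs_cons)

lemma lcs_monge_gen:
  "lcs_length U (P @ Z @ S) + lcs_length U Z \<le> lcs_length U (P @ Z) + lcs_length U (Z @ S)"
proof (induction U arbitrary: P Z S)
  case Nil
  have "lcs_length [] V = 0" for V :: "'a list" using lcs_le1[of "[]" V] by simp
  then show ?case by simp
next
  case (Cons q U)
  let ?D = "lcs_length U"
  have mono: "?D Z \<le> ?D (P @ Z)" by (rule lcs_mono2) (simp add: subseq_drop_many)
  have a: "?D (P @ Z @ S) + ?D Z \<le> ?D (P @ Z) + ?D (Z @ S)" by (rule Cons.IH)
  show ?case
  proof (cases "q \<in> set Z")
    case True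
    then obtain Z0 Z' where Z: "Z = Z0 @ q # Z'" "q \<notin> set Z0" by (meson split_list_first)
    have b: "?D (P @ Z @ S) + ?D Z' \<le> ?D (P @ Z) + ?D (Z' @ S)"
      using Cons.IH[of "P @ Z0 @ [q]" Z' S] Z by simp
    have dZ: "tl (dropWhile (\<lambda>x. x \<noteq> q) Z) = Z'" using Z dw_split by metis
    have dZS: "tl (dropWhile (\<lambda>x. x \<noteq> q) (Z @ S)) = Z' @ S" using Z dw_split[of q Z0 "Z' @ S"] by simp
    have L2: "lcs_length (q#U) Z = max (?D Z) (Suc (?D Z'))" using True dZ by (rule lcs_cons_in)
    have L4: "lcs_length (q#U) (Z @ S) = max (?D (Z @ S)) (Suc (?D (Z' @ S)))"
      using True dZS by (intro lcs_cons_in) auto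
    show ?thesis
    proof (cases "q \<in> set P")
      case True
      then obtain P0 P' where P: "P = P0 @ q # P'" "q \<notin> set P0" by (meson split_list_first)
      have c: "?D (P' @ Z @ S) + ?D Z \<le> ?D (P' @ Z) + ?D (Z @ S)" by (rule Cons.IH)
      have d: "?D (P' @ Z @ S) + ?D Z' \<le> ?D (P' @ Z) + ?D (Z' @ S)"
        using Cons.IH[of "P' @ Z0 @ [q]" Z' S] Z by simp
      have e1: "tl (dropWhile (\<lambda>x. x \<noteq> q) (P @ Z @ S)) = P' @ Z @ S" using P dw_split[of q P0 "P' @ Z @ S"] by simp
      have e2: "tl (dropWhile (\<lambda>x. x \<noteq> q) (P @ Z)) = P' @ Z" using P dw_split[of q P0 "P' @ Z"] by simp
      have L1: "lcs_length (q#U) (P @ Z @ S) = max (?D (P @ Z @ S)) (Suc (?D (P' @ Z @ S)))"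
        using True e1 by (intro lcs_cons_in) auto
      have L3: "lcs_length (q#U) (P @ Z) = max (?D (P @ Z)) (Suc (?D (P' @ Z)))"
        using True e2 by (intro lcs_cons_in) auto
      show ?thesis unfolding L1 L2 L3 L4 using a b c d by linarith
    next
      case False
      have e1: "tl (dropWhile (\<lambda>x. x \<noteq> q) (P @ Z @ S)) = Z' @ S" using False dw_notin[of q P "Z @ S"] dZS by simp
      have e2: "tl (dropWhile (\<lambda>x. x \<noteq> q) (P @ Z)) = Z'" using False dw_notin[of q P Z] dZ by simp
      have L1: "lcs_length (q#U) (P @ Z @ S) = max (?D (P @ Z @ S)) (Suc (?D (Z' @ S)))"
        using \<open>q \<in> set Z\<close> e1 by (intro lcs_cons_in) auto
      have L3: "lcs_length (q#U) (P @ Z) = max (?D (P @ Z)) (Suc (?D Z'))"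
        using \<open>q \<in> set Z\<close> e2 by (intro lcs_cons_in) auto
      show ?thesis unfolding L1 L2 L3 L4 using a b mono by linarith
    qed
  next
    case False
    have L2: "lcs_length (q#U) Z = ?D Z" using False by (rule lcs_cons_notin)
    show ?thesis
    proof (cases "q \<in> set P")
      case True
      then obtain P0 P' where P: "P = P0 @ q # P'" "q \<notin> set P0" by (meson split_list_first)
      have c: "?D (P' @ Z @ S) + ?D Z \<le> ?D (P' @ Z) + ?D (Z @ S)" by (rule Cons.IH)
      have e1: "tl (dropWhile (\<lambda>x. x \<noteq> q) (P @ Z @ S)) = P' @ Z @ S" using P dw_split[of q P0 "P' @ Z @ S"] by simp
      have e2: "tl (dropWhile (\<lambda>x. x \<noteq> q) (P @ Z)) = P' @ Z" using P dw_split[of q P0 "P' @ Z"] by simp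
      have L1: "lcs_length (q#U) (P @ Z @ S) = max (?D (P @ Z @ S)) (Suc (?D (P' @ Z @ S)))"
        using True e1 by (intro lcs_cons_in) auto
      have L3: "lcs_length (q#U) (P @ Z) = max (?D (P @ Z)) (Suc (?D (P' @ Z)))"
        using True e2 by (intro lcs_cons_in) auto
      have L4: "lcs_length (q#U) (Z @ S) \<ge> ?D (Z @ S)" by (rule lcs_mono1) auto
      show ?thesis unfolding L1 L2 L3 using a c L4 by linarith
    next
      case nP: False
      have L3: "lcs_length (q#U) (P @ Z) = ?D (P @ Z)" using nP False by (intro lcs_cons_notin) auto
      show ?thesis
      proof (cases "q \<in> set S")
        case True
        have e1: "tl (dropWhile (\<lambda>x. x \<noteq> q) (P @ Z @ S)) = tl (dropWhile (\<lambda>x. x \<noteq> q) (Z @ S))"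
          using nP dw_notin by metis
        have L1: "lcs_length (q#U) (P @ Z @ S) = max (?D (P @ Z @ S)) (Suc (?D (tl (dropWhile (\<lambda>x. x \<noteq> q) (Z @ S)))))"
          using True e1 by (intro lcs_cons_in) auto
        have L4: "lcs_length (q#U) (Z @ S) = max (?D (Z @ S)) (Suc (?D (tl (dropWhile (\<lambda>x. x \<noteq> q) (Z @ S)))))"
          using True by (intro lcs_cons_in) auto
        show ?thesis unfolding L1 L2 L3 L4 using a mono by linarith
      next
        case nS: False
        have L1: "lcs_length (q#U) (P @ Z @ S) = ?D (P @ Z @ S)" using nP nS False by (intro lcs_cons_notin) auto
        have L4: "lcs_length (q#U) (Z @ S) = ?D (Z @ S)" using nS False by (intro lcs_cons_notin) auto
        show ?thesis unfolding L1 L2 L3 L4 using a by linarith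
      qed
    qed
  qed
qed

lemma lcs_monge: "lcs_length U (c # Z @ [d]) + lcs_length U Z \<le> lcs_length U (c # Z) + lcs_length U (Z @ [d])"
  using lcs_monge_gen[of U "[c]" Z "[d]"] by simp

lemma lcs_snoc: "Suc (lcs_length xs ys) \<le> lcs_length (xs @ [b]) (ys @ [b])"
proof -
  obtain zs where zs: "common_subseq zs xs ys" "length zs = lcs_length xs ys" using lcs_ex by blast
  then have "common_subseq (zs @ [b]) (xs @ [b]) (ys @ [b])" by (simp add: common_subseq_def)
  from lcs_ge[OF this] zs show ?thesis by simp
qed

lemma subseq_set: "subseq zs ys \<Longrightarrow> set zs \<subseteq> set ys"
  by (auto elim: list_emb_set)

lemma lcs_filter: "a \<notin> set ys \<Longrightarrow> lcs_length xs ys = lcs_length (filter (\<lambda>x. x \<noteq> a) xs) ys"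
proof (rule le_antisym)
  assume a: "a \<notin> set ys"
  obtain zs where zs: "common_subseq zs xs ys" "length zs = lcs_length xs ys" using lcs_ex by blast
  then have "a \<notin> set zs" using a subseq_set by (force simp: common_subseq_def)
  then have "filter (\<lambda>x. x \<noteq> a) zs = zs" by (induction zs) auto
  then have "common_subseq zs (filter (\<lambda>x. x \<noteq> a) xs) ys" using zs subseq_filter[of zs xs "\<lambda>x. x \<noteq> a"]
    by (auto simp: common_subseq_def)
  from lcs_ge[OF this] zs show "lcs_length xs ys \<le> lcs_length (filter (\<lambda>x. x \<noteq> a) xs) ys" by simp
next
  show "lcs_length (filter (\<lambda>x. x \<noteq> a) xs) ys \<le> lcs_length xs ys" by (rule lcs_mono1) simp
qed

lemma lcs_del: "a \<notin> set ys \<Longrightarrow> lcs_length (as @ a # bs) ys = lcs_length (as @ bs) ys"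
  using lcs_filter[of a ys "as @ a # bs"] lcs_filter[of a ys "as @ bs"] by simp

lemma lcs_le_filter: "a \<notin> set ys \<Longrightarrow> lcs_length xs ys \<le> length (filter (\<lambda>x. x \<noteq> a) xs)"
  using lcs_filter[of a ys xs] lcs_le1[of "filter (\<lambda>x. x \<noteq> a) xs" ys] by simp

lemma lcs_nil2: "lcs_length xs [] = 0"
  using lcs_le1[of "[]" xs] lcs_sym[of xs "[]"] by simp




definition LL :: "nat \<Rightarrow> letter list set" where "LL n = {xs. length xs = n}"

definition EW :: "(letter \<Rightarrow> real) \<Rightarrow> nat \<Rightarrow> (letter list \<Rightarrow> real) \<Rightarrow> real" where
  "EW w n F = (\<Sum>xs\<in>LL n. prod_list (map w xs) * F xs)"

lemma letter_all: "x \<in> {Zero, One, A}" by (cases x) auto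

lemma LL_finite: "finite (LL n)"
proof -
  have "LL n = {xs. set xs \<subseteq> {Zero, One, A} \<and> length xs = n}" using letter_all by (auto simp: LL_def)
  then show ?thesis by (simp add: finite_lists_length_eq)
qed

lemma LL_app_image: "LL (m + k) = (\<lambda>(a, b). a @ b) ` (LL m \<times> LL k)"
proof (rule equalityI)
  show "LL (m + k) \<subseteq> (\<lambda>(a, b). a @ b) ` (LL m \<times> LL k)"
  proof
    fix xs assume "xs \<in> LL (m + k)"
    then have "(take m xs, drop m xs) \<in> LL m \<times> LL k" "xs = take m xs @ drop m xs" by (auto simp: LL_def)
    then show "xs \<in> (\<lambda>(a, b). a @ b) ` (LL m \<times> LL k)" by (metis (no_types, lifting) case_prod_conv image_eqI)
  qed
  show "(\<lambda>(a, b). a @ b) ` (LL m \<times> LL k) \<subseteq> LL (m + k)" by (auto simp: LL_def)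
qed

lemma LL_app_inj: "inj_on (\<lambda>(a, b). a @ b) (LL m \<times> LL k)"
  by (auto simp: inj_on_def LL_def)

lemma EW_app: "EW w (m + k) F = EW w m (\<lambda>as. EW w k (\<lambda>bs. F (as @ bs)))"
proof -
  have "EW w (m + k) F = (\<Sum>(a, b)\<in>LL m \<times> LL k. prod_list (map w (a @ b)) * F (a @ b))"
    unfolding EW_def LL_app_image by (subst sum.reindex[OF LL_app_inj]) (simp add: case_prod_beta)
  also have "\<dots> = (\<Sum>a\<in>LL m. \<Sum>b\<in>LL k. prod_list (map w a) * (prod_list (map w b) * F (a @ b)))"
    by (subst sum.cartesian_product[symmetric]) (simp add: mult.assoc)
  also have "\<dots> = EW w m (\<lambda>as. EW w k (\<lambda>bs. F (as @ bs)))"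
    unfolding EW_def by (simp add: sum_distrib_left)
  finally show ?thesis .
qed

lemma LL_0: "LL 0 = {[]}" by (auto simp: LL_def)

lemma LL_1: "LL (Suc 0) = {[Zero], [One], [A]}"
proof (rule equalityI)
  show "LL (Suc 0) \<subseteq> {[Zero], [One], [A]}"
  proof
    fix xs assume "xs \<in> LL (Suc 0)"
    then obtain c where "xs = [c]" by (auto simp: LL_def length_Suc_conv)
    then show "xs \<in> {[Zero], [One], [A]}" by (cases c) auto
  qed
  show "{[Zero], [One], [A]} \<subseteq> LL (Suc 0)" by (auto simp: LL_def)
qed

lemma EW_0: "EW w 0 F = F []" by (simp add: EW_def LL_0)

lemma EW_1: "EW w (Suc 0) F = w Zero * F [Zero] + w One * F [One] + w A * F [A]"
  by (simp add: EW_def LL_1)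

lemma EW_Suc_cons: "EW w (Suc n) F =
   w Zero * EW w n (\<lambda>xs. F (Zero # xs)) + w One * EW w n (\<lambda>xs. F (One # xs)) + w A * EW w n (\<lambda>xs. F (A # xs))"
  using EW_app[of w 1 n F] by (simp add: EW_1)

lemma EW_Suc_snoc: "EW w (Suc n) F =
   EW w n (\<lambda>xs. w Zero * F (xs @ [Zero]) + w One * F (xs @ [One]) + w A * F (xs @ [A]))"
  using EW_app[of w n 1 F] by (simp add: EW_1)

lemma EW_add: "EW w n (\<lambda>x. F x + G x) = EW w n F + EW w n G"
  by (simp add: EW_def sum.distrib algebra_simps)

lemma EW_diff: "EW w n (\<lambda>x. F x - G x) = EW w n F - EW w n G"
  by (simp add: EW_def sum_subtractf algebra_simps)

lemma EW_cmult: "EW w n (\<lambda>x. c * F x) = c * EW w n F"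
  by (simp add: EW_def sum_distrib_left algebra_simps)

lemma EW_cong: "(\<And>x. x \<in> LL n \<Longrightarrow> F x = G x) \<Longrightarrow> EW w n F = EW w n G"
  by (simp add: EW_def)

lemma W_nonneg: "(\<And>c. w c \<ge> 0) \<Longrightarrow> prod_list (map w xs) \<ge> (0::real)"
  by (induction xs) auto

lemma EW_mono: "(\<And>c. w c \<ge> 0) \<Longrightarrow> (\<And>x. x \<in> LL n \<Longrightarrow> F x \<le> G x) \<Longrightarrow> EW w n F \<le> EW w n G"
  unfolding EW_def by (intro sum_mono mult_left_mono) (auto intro: W_nonneg)

lemma EW_const: "w Zero + w One + w A = 1 \<Longrightarrow> EW w n (\<lambda>_. c) = c"
proof (induction n)
  case 0 then show ?case by (simp add: EW_0)
next
  case (Suc n)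
  have "EW w (Suc n) (\<lambda>_. c) = c * (w Zero + w One + w A)" by (simp add: EW_Suc_cons Suc.IH[OF Suc.prems] algebra_simps)
  then show ?case using Suc.prems by simp
qed




definition wx :: "real \<Rightarrow> letter \<Rightarrow> real" where
  "wx p c = (case c of Zero \<Rightarrow> (1 - p) / 2 | One \<Rightarrow> (1 - p) / 2 | A \<Rightarrow> p)"
definition wy :: "letter \<Rightarrow> real" where
  "wy c = (case c of Zero \<Rightarrow> 1 / 2 | One \<Rightarrow> 1 / 2 | A \<Rightarrow> 0)"

lemma wx_simps[simp]: "wx p Zero = (1 - p) / 2" "wx p One = (1 - p) / 2" "wx p A = p"
  by (simp_all add: wx_def)
lemma wy_simps[simp]: "wy Zero = 1 / 2" "wy One = 1 / 2" "wy A = 0"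
  by (simp_all add: wy_def)

definition Lr :: "letter list \<Rightarrow> letter list \<Rightarrow> real" where
  "Lr xs ys = real (lcs_length xs ys)"

lemma wy_nonneg: "wy c \<ge> 0" by (cases c) auto
lemma wx_nonneg: "0 \<le> p \<Longrightarrow> p \<le> 1 \<Longrightarrow> wx p c \<ge> 0" by (cases c) auto

lemma EWy_const[simp]: "EW wy n (\<lambda>_. c) = c" by (rule EW_const) simp
lemma EWx_const[simp]: "EW (wx p) n (\<lambda>_. c) = c" by (rule EW_const) simp

lemma EW_divide: "EW w n (\<lambda>x. F x / c) = EW w n F / c"
  by (simp add: EW_def sum_divide_distrib)
lemma EW_cmult2: "EW w n (\<lambda>x. F x * c) = EW w n F * c"
  using EW_cmult[of w n c F] by (simp add: mult.commute)
lemma EW_uminus: "EW w n (\<lambda>x. - F x) = - EW w n F"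
  by (simp add: EW_def sum_negf)

lemmas EW_lin = EW_add EW_diff EW_cmult EW_cmult2 EW_divide EW_uminus

lemma Wy_zero: "A \<in> set ys \<Longrightarrow> prod_list (map wy ys) = 0"
  by (simp add: prod_list_zero_iff) (metis image_eqI wy_simps(3))

lemma EWy_mono_noA: "(\<And>ys. ys \<in> LL n \<Longrightarrow> A \<notin> set ys \<Longrightarrow> F ys \<le> G ys) \<Longrightarrow> EW wy n F \<le> EW wy n G"
  unfolding EW_def
proof (intro sum_mono)
  fix ys assume h: "(\<And>ys. ys \<in> LL n \<Longrightarrow> A \<notin> set ys \<Longrightarrow> F ys \<le> G ys)" and ys: "ys \<in> LL n"
  show "prod_list (map wy ys) * F ys \<le> prod_list (map wy ys) * G ys"
  proof (cases "A \<in> set ys")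
    case True then show ?thesis by (simp add: Wy_zero)
  next
    case False then show ?thesis using h ys by (intro mult_left_mono W_nonneg wy_nonneg) auto
  qed
qed

lemma EWy_cong_noA: "(\<And>ys. ys \<in> LL n \<Longrightarrow> A \<notin> set ys \<Longrightarrow> F ys = G ys) \<Longrightarrow> EW wy n F = EW wy n G"
  by (intro order.antisym EWy_mono_noA) auto

lemma EWy_concave_pt:
  "EW wy (Suc (Suc i)) F + EW wy i F - 2 * EW wy (Suc i) F =
   EW wy i (\<lambda>ws. ((F (Zero # ws @ [Zero]) + F ws - F (Zero # ws) - F (ws @ [Zero]))
                 + (F (Zero # ws @ [One]) + F ws - F (Zero # ws) - F (ws @ [One]))
                 + (F (One # ws @ [Zero]) + F ws - F (One # ws) - F (ws @ [Zero]))
                 + (F (One # ws @ [One]) + F ws - F (One # ws) - F (ws @ [One]))) / 4)"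
proof -
  have e1: "EW wy (Suc (Suc i)) F = EW wy i (\<lambda>ws. F (Zero # ws @ [Zero])) / 4 + EW wy i (\<lambda>ws. F (Zero # ws @ [One])) / 4
      + EW wy i (\<lambda>ws. F (One # ws @ [Zero])) / 4 + EW wy i (\<lambda>ws. F (One # ws @ [One])) / 4"
    by (subst EW_Suc_cons) (simp add: EW_Suc_snoc EW_lin field_simps)
  have e2: "EW wy (Suc i) F = EW wy i (\<lambda>ws. F (Zero # ws)) / 2 + EW wy i (\<lambda>ws. F (One # ws)) / 2"
    by (simp add: EW_Suc_cons EW_lin)
  have e3: "EW wy (Suc i) F = EW wy i (\<lambda>ws. F (ws @ [Zero])) / 2 + EW wy i (\<lambda>ws. F (ws @ [One])) / 2"
    by (simp add: EW_Suc_snoc EW_lin)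
  show ?thesis
    apply (simp only: EW_lin)
    using e1 e2 e3 by simp
qed

definition E2 :: "real \<Rightarrow> nat \<Rightarrow> nat \<Rightarrow> (letter list \<Rightarrow> letter list \<Rightarrow> real) \<Rightarrow> real" where
  "E2 p m n f = EW (wx p) m (\<lambda>xs. EW wy n (\<lambda>ys. f xs ys))"

lemma Lr_monge: "Lr U (c # Z @ [d]) + Lr U Z \<le> Lr U (c # Z) + Lr U (Z @ [d])"
  using lcs_monge[of U c Z d] unfolding Lr_def by linarith

lemma G_concave:
  assumes "0 \<le> p" "p \<le> 1"
  shows "E2 p m (Suc (Suc i)) Lr + E2 p m i Lr \<le> 2 * E2 p m (Suc i) Lr"
proof -
  have "E2 p m (Suc (Suc i)) Lr + E2 p m i Lr - 2 * E2 p m (Suc i) Lr =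
    EW (wx p) m (\<lambda>zs. EW wy (Suc (Suc i)) (Lr zs) + EW wy i (Lr zs) - 2 * EW wy (Suc i) (Lr zs))"
    unfolding E2_def by (simp add: EW_lin)
  also have "\<dots> \<le> EW (wx p) m (\<lambda>_. 0)"
  proof (rule EW_mono)
    show "0 \<le> wx p c" for c using assms by (rule wx_nonneg)
    fix zs
    have "EW wy (Suc (Suc i)) (Lr zs) + EW wy i (Lr zs) - 2 * EW wy (Suc i) (Lr zs) \<le> EW wy i (\<lambda>_. 0)"
      unfolding EWy_concave_pt
    proof (rule EW_mono)
      fix ws
      show "0 \<le> wy c" for c by (rule wy_nonneg)
      have "Lr zs (c # ws @ [d]) + Lr zs ws \<le> Lr zs (c # ws) + Lr zs (ws @ [d])" for c d by (rule Lr_monge)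
      from this[of Zero Zero] this[of Zero One] this[of One Zero] this[of One One]
      have "((Lr zs (Zero # ws @ [Zero]) + Lr zs ws - Lr zs (Zero # ws) - Lr zs (ws @ [Zero]))
                 + (Lr zs (Zero # ws @ [One]) + Lr zs ws - Lr zs (Zero # ws) - Lr zs (ws @ [One]))
                 + (Lr zs (One # ws @ [Zero]) + Lr zs ws - Lr zs (One # ws) - Lr zs (ws @ [Zero]))
                 + (Lr zs (One # ws @ [One]) + Lr zs ws - Lr zs (One # ws) - Lr zs (ws @ [One]))) \<le> 0"
        by linarith
      then show "((Lr zs (Zero # ws @ [Zero]) + Lr zs ws - Lr zs (Zero # ws) - Lr zs (ws @ [Zero]))
                 + (Lr zs (Zero # ws @ [One]) + Lr zs ws - Lr zs (Zero # ws) - Lr zs (ws @ [One]))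
                 + (Lr zs (One # ws @ [Zero]) + Lr zs ws - Lr zs (One # ws) - Lr zs (ws @ [Zero]))
                 + (Lr zs (One # ws @ [One]) + Lr zs ws - Lr zs (One # ws) - Lr zs (ws @ [One]))) / 4 \<le> 0"
        by (simp add: divide_le_0_iff)
    qed
    then show "EW wy (Suc (Suc i)) (Lr zs) + EW wy i (Lr zs) - 2 * EW wy (Suc i) (Lr zs) \<le> 0" by simp
  qed
  finally show ?thesis by simp
qed

lemma G_zero: "E2 p m 0 Lr = 0"
  by (simp add: E2_def EW_0 Lr_def lcs_nil2)

lemma G_slope:
  assumes "0 \<le> p" "p \<le> 1"
  shows "real (Suc j) * (E2 p m (Suc j) Lr - E2 p m j Lr) \<le> E2 p m (Suc j) Lr"
proof -
  define d where "d k = E2 p m (Suc k) Lr - E2 p m k Lr" for k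
  have dec: "d (Suc k) \<le> d k" for k using G_concave[OF assms, of m k] by (simp add: d_def)
  have "E2 p m (Suc j) Lr = (\<Sum>k<Suc j. d k)"
    unfolding d_def by (subst sum_lessThan_telescope) (simp add: G_zero)
  also have "\<dots> \<ge> (\<Sum>k<Suc j. d j)"
    by (intro sum_mono) (auto intro: lift_Suc_antimono_le[of d, OF dec])
  finally show ?thesis by (simp add: d_def)
qed

lemma EW_nonA: "EW (wx p) m (\<lambda>xs. real (length (filter (\<lambda>x. x \<noteq> A) xs))) = real m * (1 - p)"
proof (induction m)
  case 0 then show ?case by (simp add: EW_0)
next
  case (Suc m)
  have "EW (wx p) (Suc m) (\<lambda>xs. real (length (filter (\<lambda>x. x \<noteq> A) xs))) =
        EW (wx p) m (\<lambda>xs. real (length (filter (\<lambda>x. x \<noteq> A) xs)) + (1 - p))"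
    by (simp add: EW_Suc_snoc) (simp add: field_simps)
  also have "\<dots> = real (Suc m) * (1 - p)" by (simp add: EW_lin Suc.IH algebra_simps)
  finally show ?case .
qed

lemma G_upper:
  assumes "0 \<le> p" "p \<le> 1"
  shows "E2 p m n Lr \<le> real m * (1 - p)"
proof -
  have "E2 p m n Lr \<le> EW (wx p) m (\<lambda>xs. real (length (filter (\<lambda>x. x \<noteq> A) xs)))"
    unfolding E2_def
  proof (rule EW_mono)
    show "0 \<le> wx p c" for c using assms by (rule wx_nonneg)
    fix xs
    have "EW wy n (Lr xs) \<le> EW wy n (\<lambda>_. real (length (filter (\<lambda>x. x \<noteq> A) xs)))"
      by (rule EWy_mono_noA) (simp add: Lr_def lcs_le_filter)
    then show "EW wy n (Lr xs) \<le> real (length (filter (\<lambda>x. x \<noteq> A) xs))" by simp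
  qed
  then show ?thesis by (simp add: EW_nonA)
qed

lemma d_bound:
  assumes "0 \<le> p" "p \<le> 1"
  shows "E2 p m (Suc m) Lr - E2 p m m Lr \<le> 1 - p"
proof -
  have "real (Suc m) * (E2 p m (Suc m) Lr - E2 p m m Lr) \<le> real m * (1 - p)"
    using G_slope[OF assms, of m m] G_upper[OF assms, of m "Suc m"] by linarith
  also have "\<dots> \<le> real (Suc m) * (1 - p)" using assms by (intro mult_right_mono) auto
  finally show ?thesis by (simp only: mult_le_cancel_left_pos[of "real (Suc m)"])
qed

lemma Delta_pt:
  assumes "0 \<le> p" "p \<le> 1"
  shows "(1 - p) / 2 * EW wy (Suc m) (Lr (zs @ [Zero])) + (1 - p) / 2 * EW wy (Suc m) (Lr (zs @ [One]))
       + p * EW wy (Suc m) (Lr (zs @ [A])) - EW wy (Suc m) (Lr zs)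
     \<ge> (1 - p) / 2 * (1 - (EW wy (Suc m) (Lr zs) - EW wy m (Lr zs)))"
proof -
  define H where "H c ys = Lr (zs @ [c]) ys - Lr zs ys" for c ys
  have H0: "H c ys \<ge> 0" for c ys unfolding H_def Lr_def using lcs_mono1[of zs "zs @ [c]" ys] subseq_rev_drop_many[of zs zs "[c]"] by simp
  have H1: "H d (ws @ [d]) \<ge> 1 - (Lr zs (ws @ [d]) - Lr zs ws)" for d ws
    unfolding H_def Lr_def using lcs_snoc[of zs ws d] by simp
  have "(1 - p) / 2 * EW wy (Suc m) (Lr (zs @ [Zero])) + (1 - p) / 2 * EW wy (Suc m) (Lr (zs @ [One]))
       + p * EW wy (Suc m) (Lr (zs @ [A])) - EW wy (Suc m) (Lr zs)
      = EW wy m (\<lambda>ws. (1 - p) / 2 * ((H Zero (ws @ [Zero]) + H Zero (ws @ [One])) / 2)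
           + (1 - p) / 2 * ((H One (ws @ [Zero]) + H One (ws @ [One])) / 2)
           + p * ((H A (ws @ [Zero]) + H A (ws @ [One])) / 2))"
    by (simp add: EW_Suc_snoc EW_lin H_def field_simps)
  also have "\<dots> \<ge> EW wy m (\<lambda>ws. (1 - p) / 2 * (((1 - (Lr zs (ws @ [Zero]) - Lr zs ws)) + (1 - (Lr zs (ws @ [One]) - Lr zs ws))) / 2))"
  proof (rule EW_mono)
    show "0 \<le> wy c" for c by (rule wy_nonneg)
    fix ws
    have a: "(1 - p) / 2 * H One (ws @ [Zero]) \<ge> 0" "(1 - p) / 2 * H Zero (ws @ [One]) \<ge> 0"
      "p * H A (ws @ [Zero]) \<ge> 0" "p * H A (ws @ [One]) \<ge> 0"
      using H0 assms by auto
    have b: "(1 - p) / 2 * H Zero (ws @ [Zero]) \<ge> (1 - p) / 2 * (1 - (Lr zs (ws @ [Zero]) - Lr zs ws))"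
      "(1 - p) / 2 * H One (ws @ [One]) \<ge> (1 - p) / 2 * (1 - (Lr zs (ws @ [One]) - Lr zs ws))"
      using H1 assms by (auto intro: mult_left_mono)
    show "(1 - p) / 2 * (((1 - (Lr zs (ws @ [Zero]) - Lr zs ws)) + (1 - (Lr zs (ws @ [One]) - Lr zs ws))) / 2)
       \<le> (1 - p) / 2 * ((H Zero (ws @ [Zero]) + H Zero (ws @ [One])) / 2)
           + (1 - p) / 2 * ((H One (ws @ [Zero]) + H One (ws @ [One])) / 2)
           + p * ((H A (ws @ [Zero]) + H A (ws @ [One])) / 2)"
      using a b by (simp add: field_simps)
  qed
  also have "EW wy m (\<lambda>ws. (1 - p) / 2 * (((1 - (Lr zs (ws @ [Zero]) - Lr zs ws)) + (1 - (Lr zs (ws @ [One]) - Lr zs ws))) / 2))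
     = (1 - p) / 2 * (1 - (EW wy (Suc m) (Lr zs) - EW wy m (Lr zs)))"
    by (simp add: EW_Suc_snoc EW_lin field_simps)
  finally show ?thesis .
qed

lemma Delta_bound:
  assumes "0 \<le> p" "p \<le> 1"
  shows "E2 p (Suc m) (Suc m) Lr - E2 p m (Suc m) Lr \<ge> p * (1 - p) / 2"
proof -
  have "E2 p (Suc m) (Suc m) Lr - E2 p m (Suc m) Lr =
    EW (wx p) m (\<lambda>zs. (1 - p) / 2 * EW wy (Suc m) (Lr (zs @ [Zero])) + (1 - p) / 2 * EW wy (Suc m) (Lr (zs @ [One]))
       + p * EW wy (Suc m) (Lr (zs @ [A])) - EW wy (Suc m) (Lr zs))"
    unfolding E2_def by (subst EW_Suc_snoc) (simp add: EW_lin)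
  also have "\<dots> \<ge> EW (wx p) m (\<lambda>zs. (1 - p) / 2 * (1 - (EW wy (Suc m) (Lr zs) - EW wy m (Lr zs))))"
    by (rule EW_mono) (use assms Delta_pt wx_nonneg in auto)
  also have "EW (wx p) m (\<lambda>zs. (1 - p) / 2 * (1 - (EW wy (Suc m) (Lr zs) - EW wy m (Lr zs))))
     = (1 - p) / 2 * (1 - (E2 p m (Suc m) Lr - E2 p m m Lr))"
    unfolding E2_def by (simp add: EW_lin)
  also have "\<dots> \<ge> (1 - p) / 2 * p"
    using d_bound[OF assms, of m] assms by (intro mult_left_mono) auto
  finally show ?thesis by (simp add: algebra_simps)
qed

lemma EW_sum: "EW w n (\<lambda>x. \<Sum>i\<in>I. F i x) = (\<Sum>i\<in>I. EW w n (F i))"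
  unfolding EW_def by (simp add: sum_distrib_left) (rule sum.swap)

definition NA :: "letter list \<Rightarrow> real" where "NA xs = real (length (filter (\<lambda>x. x = A) xs))"

lemma NA_sum: "NA xs = (\<Sum>i<length xs. if xs ! i = A then 1 else 0)"
proof -
  have "NA xs = real (card {i \<in> {..<length xs}. xs ! i = A})"
    unfolding NA_def length_filter_conv_card by (rule arg_cong[where f = "\<lambda>S. real (card S)"]) auto
  also have "\<dots> = (\<Sum>i\<in>{i \<in> {..<length xs}. xs ! i = A}. 1)" by simp
  also have "\<dots> = (\<Sum>i<length xs. if xs ! i = A then 1 else 0)" by (subst sum.inter_filter) auto
  finally show ?thesis .
qed

lemma KL_i:
  assumes "i < n"
  shows "EW (wx p) n (\<lambda>xs. EW wy n' (Lr xs) * (if xs ! i = A then 1 else 0)) = p * E2 p (n - 1) n' Lr"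
proof -
  obtain k where n: "n = i + Suc k" using assms by (metis add_Suc_right less_imp_Suc_add)
  have "EW (wx p) n (\<lambda>xs. EW wy n' (Lr xs) * (if xs ! i = A then 1 else 0)) =
     EW (wx p) i (\<lambda>as. EW (wx p) (Suc k) (\<lambda>bs. EW wy n' (Lr (as @ bs)) * (if (as @ bs) ! i = A then 1 else 0)))"
    unfolding n by (rule EW_app)
  also have "\<dots> = EW (wx p) i (\<lambda>as. p * EW (wx p) k (\<lambda>bs. EW wy n' (Lr (as @ A # bs))))"
  proof (rule EW_cong)
    fix as assume "as \<in> LL i"
    then have l: "length as = i" by (simp add: LL_def)
    show "EW (wx p) (Suc k) (\<lambda>bs. EW wy n' (Lr (as @ bs)) * (if (as @ bs) ! i = A then 1 else 0)) =
          p * EW (wx p) k (\<lambda>bs. EW wy n' (Lr (as @ A # bs)))"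
      by (subst EW_Suc_cons) (simp add: nth_append l EW_lin)
  qed
  also have "\<dots> = EW (wx p) i (\<lambda>as. p * EW (wx p) k (\<lambda>bs. EW wy n' (Lr (as @ bs))))"
    by (intro EW_cong arg_cong[where f = "\<lambda>x. p * x"] EWy_cong_noA) (simp add: Lr_def lcs_del)
  also have "\<dots> = p * E2 p (n - 1) n' Lr"
    unfolding E2_def using EW_app[of "wx p" i k "\<lambda>zs. EW wy n' (Lr zs)"] n by (simp add: EW_lin)
  finally show ?thesis .
qed

lemma KL:
  "E2 p n n' (\<lambda>xs ys. Lr xs ys * NA xs) = real n * p * E2 p (n - 1) n' Lr"
proof -
  have "E2 p n n' (\<lambda>xs ys. Lr xs ys * NA xs) = EW (wx p) n (\<lambda>xs. \<Sum>i<n. EW wy n' (Lr xs) * (if xs ! i = A then 1 else 0))"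
    unfolding E2_def
  proof (rule EW_cong)
    fix xs assume "xs \<in> LL n"
    then have "length xs = n" by (simp add: LL_def)
    then show "EW wy n' (\<lambda>ys. Lr xs ys * NA xs) = (\<Sum>i<n. EW wy n' (Lr xs) * (if xs ! i = A then 1 else 0))"
      by (simp only: EW_cmult2 NA_sum sum_distrib_left EW_sum)
  qed
  also have "\<dots> = (\<Sum>i<n. p * E2 p (n - 1) n' Lr)" by (simp add: EW_sum KL_i)
  finally show ?thesis by simp
qed

lemma NA_snoc: "NA (xs @ [c]) = NA xs + (if c = A then 1 else 0)"
  by (simp add: NA_def)

lemma NA_mean: "EW (wx p) n NA = real n * p"
proof (induction n)
  case 0 then show ?case by (simp add: EW_0 NA_def)
next
  case (Suc n)
  have "EW (wx p) (Suc n) NA = EW (wx p) n (\<lambda>xs. NA xs + p)"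
    by (simp add: EW_Suc_snoc NA_snoc) (simp add: field_simps)
  then show ?case by (simp add: EW_lin Suc.IH algebra_simps)
qed

lemma NA_var: "EW (wx p) n (\<lambda>xs. (NA xs - real n * p)\<^sup>2) = real n * p * (1 - p)"
proof (induction n)
  case 0 then show ?case by (simp add: EW_0 NA_def)
next
  case (Suc n)
  have "EW (wx p) (Suc n) (\<lambda>xs. (NA xs - real (Suc n) * p)\<^sup>2) = EW (wx p) n (\<lambda>xs. (NA xs - real n * p)\<^sup>2 + p * (1 - p))"
    by (simp add: EW_Suc_snoc NA_snoc) (simp add: field_simps power2_eq_square)
  also have "\<dots> = EW (wx p) n (\<lambda>xs. (NA xs - real n * p)\<^sup>2) + p * (1 - p)" by (subst EW_add) simp
  finally show ?case using Suc.IH by (simp add: algebra_simps)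
qed

lemma E2_nonneg:
  assumes "0 \<le> p" "p \<le> 1" "\<And>x y. f x y \<ge> 0"
  shows "E2 p m n f \<ge> 0"
proof -
  have "EW (wx p) m (\<lambda>_. 0) \<le> E2 p m n f"
    unfolding E2_def
  proof (rule EW_mono)
    show "0 \<le> wx p c" for c using assms(1,2) by (rule wx_nonneg)
    fix xs
    have "EW wy n (\<lambda>_. 0) \<le> EW wy n (f xs)" by (rule EW_mono) (use wy_nonneg assms in auto)
    then show "0 \<le> EW wy n (\<lambda>ys. f xs ys)" by simp
  qed
  then show ?thesis by simp
qed

lemma E2_cs:
  assumes "0 \<le> p" "p \<le> 1" "B = E2 p m n (\<lambda>x y. (b x y)\<^sup>2)" "B > 0"
  shows "E2 p m n (\<lambda>x y. (a x y)\<^sup>2) \<ge> (E2 p m n (\<lambda>x y. a x y * b x y))\<^sup>2 / B"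
proof -
  define C where "C = E2 p m n (\<lambda>x y. a x y * b x y)"
  define t where "t = C / B"
  have "0 \<le> E2 p m n (\<lambda>x y. (a x y - t * b x y)\<^sup>2)" by (rule E2_nonneg) (use assms in auto)
  also have "E2 p m n (\<lambda>x y. (a x y - t * b x y)\<^sup>2) =
      E2 p m n (\<lambda>x y. (a x y)\<^sup>2 - (2 * t) * (a x y * b x y) + t\<^sup>2 * (b x y)\<^sup>2)"
    by (simp add: power2_eq_square algebra_simps)
  also have "\<dots> = E2 p m n (\<lambda>x y. (a x y)\<^sup>2) - (2 * t) * C + t\<^sup>2 * B"
    unfolding E2_def C_def assms(3) by (simp add: EW_lin)
  finally have "0 \<le> E2 p m n (\<lambda>x y. (a x y)\<^sup>2) - (2 * t) * C + t\<^sup>2 * B" .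
  moreover have "(2 * t) * C - t\<^sup>2 * B = C\<^sup>2 / B" using assms(4) unfolding t_def by (simp add: field_simps power2_eq_square)
  ultimately show ?thesis unfolding C_def[symmetric] by linarith
qed

lemma finite_var:
  assumes "0 < p" "p < 1"
  shows "E2 p n n (\<lambda>xs ys. (Lr xs ys - E2 p n n Lr)\<^sup>2) \<ge> p ^ 3 * (1 - p) / 4 * real n"
proof (cases n)
  case 0
  then show ?thesis using E2_nonneg[of p "\<lambda>xs ys. (Lr xs ys - E2 p n n Lr)\<^sup>2" n n] assms by simp
next
  case (Suc m)
  have p01: "0 \<le> p" "p \<le> 1" using assms by auto
  define \<mu> where "\<mu> = E2 p n n Lr"
  define \<Delta> where "\<Delta> = E2 p n n Lr - E2 p m n Lr"
  have D: "\<Delta> \<ge> p * (1 - p) / 2" unfolding \<Delta>_def Suc using Delta_bound[OF p01, of m] by simp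
  define B where "B = E2 p n n (\<lambda>x y. (NA x - real n * p)\<^sup>2)"
  have B: "B = real n * p * (1 - p)" unfolding B_def E2_def by (simp add: NA_var)
  have Bpos: "B > 0" using assms Suc B by simp
  have C: "E2 p n n (\<lambda>x y. (Lr x y - \<mu>) * (NA x - real n * p)) = - (real n * p * \<Delta>)"
  proof -
    have "E2 p n n (\<lambda>x y. (Lr x y - \<mu>) * (NA x - real n * p)) =
      E2 p n n (\<lambda>x y. Lr x y * NA x) - (real n * p) * E2 p n n Lr - \<mu> * EW (wx p) n NA + \<mu> * (real n * p)"
      unfolding E2_def by (simp add: algebra_simps EW_lin)
    also have "\<dots> = - (real n * p * \<Delta>)"
      unfolding KL NA_mean \<Delta>_def \<mu>_def Suc by (simp add: algebra_simps)
    finally show ?thesis .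
  qed
  have "E2 p n n (\<lambda>xs ys. (Lr xs ys - \<mu>)\<^sup>2) \<ge> (- (real n * p * \<Delta>))\<^sup>2 / B"
    using E2_cs[OF p01 B_def Bpos, of "\<lambda>x y. Lr x y - \<mu>"] C by simp
  also have "p ^ 3 * (1 - p) / 4 * real n \<le> (- (real n * p * \<Delta>))\<^sup>2 / B"
  proof (subst pos_le_divide_eq[OF Bpos])
    have Dsq: "(p * (1 - p) / 2)\<^sup>2 \<le> \<Delta>\<^sup>2" using D assms by (intro power_mono) auto
    have "p ^ 3 * (1 - p) / 4 * real n * B = (real n * p)\<^sup>2 * (p * (1 - p) / 2)\<^sup>2"
      unfolding B by (simp add: power2_eq_square power3_eq_cube field_simps)
    also have "\<dots> \<le> (real n * p)\<^sup>2 * \<Delta>\<^sup>2" using Dsq by (intro mult_left_mono) auto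
    also have "\<dots> = (- (real n * p * \<Delta>))\<^sup>2" by (simp add: power2_eq_square)
    finally show "p ^ 3 * (1 - p) / 4 * real n * B \<le> (- (real n * p * \<Delta>))\<^sup>2" .
  qed
  finally show ?thesis unfolding \<mu>_def by simp
qed




lemma prod_list_nth: "prod_list (map f xs) = (\<Prod>i<length xs. f (xs ! i))"
proof (induction xs rule: rev_induct)
  case Nil then show ?case by simp
next
  case (snoc x xs)
  have "(\<Prod>i<length (xs @ [x]). f ((xs @ [x]) ! i)) = (\<Prod>i<length xs. f ((xs @ [x]) ! i)) * f x"
    by (simp add: nth_append)
  also have "(\<Prod>i<length xs. f ((xs @ [x]) ! i)) = (\<Prod>i<length xs. f (xs ! i))"
    by (intro prod.cong) (auto simp: nth_append)
  finally show ?case using snoc by simp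
qed

lemma transfer_lemma:
  fixes M :: "'w measure" and p :: real
    and X Y :: "nat \<Rightarrow> 'w \<Rightarrow> letter"
  assumes "prob_space M"
    and "\<And>i. X i \<in> measurable M (count_space UNIV)"
    and "\<And>i. Y i \<in> measurable M (count_space UNIV)"
    and ind: "prob_space.indep_vars M (\<lambda>_. count_space UNIV)
           (\<lambda>j. case j of Inl i \<Rightarrow> X i | Inr i \<Rightarrow> Y i) UNIV"
    and dA: "\<And>i. measure M {\<omega> \<in> space M. X i \<omega> = A} = p"
    and d0: "\<And>i. measure M {\<omega> \<in> space M. X i \<omega> = Zero} = (1 - p) / 2"
    and d1: "\<And>i. measure M {\<omega> \<in> space M. X i \<omega> = One} = (1 - p) / 2"
    and e0: "\<And>i. measure M {\<omega> \<in> space M. Y i \<omega> = Zero} = 1 / 2"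
    and e1: "\<And>i. measure M {\<omega> \<in> space M. Y i \<omega> = One} = 1 / 2"
  shows "(LINT \<omega>|M. f (map (\<lambda>i. X i \<omega>) [0..<n]) (map (\<lambda>i. Y i \<omega>) [0..<n])) = E2 p n n f"
proof -
  interpret prob_space M by fact
  define Z where "Z = (\<lambda>j. case j of Inl i \<Rightarrow> X i | Inr i \<Rightarrow> Y i)"
  have Zm: "Z j \<in> measurable M (count_space UNIV)" for j
    using assms(2,3) by (cases j) (auto simp: Z_def)
  have evX: "{\<omega> \<in> space M. X i \<omega> = c} \<in> events" for i c
    using measurable_sets[OF assms(2)[of i], of "{c}"] by (simp add: vimage_def Int_def conj_commute)
  have evY: "{\<omega> \<in> space M. Y i \<omega> = c} \<in> events" for i c
    using measurable_sets[OF assms(3)[of i], of "{c}"] by (simp add: vimage_def Int_def conj_commute)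
  have pX: "prob {\<omega> \<in> space M. X i \<omega> = c} = wx p c" for i c
    using dA d0 d1 by (cases c) auto
  have pY: "prob {\<omega> \<in> space M. Y i \<omega> = c} = wy c" for i c
  proof (cases c)
    case A
    have disj: "{\<omega> \<in> space M. Y i \<omega> = Zero} \<inter> {\<omega> \<in> space M. Y i \<omega> = One} = {}" by auto
    have "prob ({\<omega> \<in> space M. Y i \<omega> = Zero} \<union> {\<omega> \<in> space M. Y i \<omega> = One}) = 1"
      using finite_measure_Union[OF evY evY disj] e0 e1 by simp
    then have "prob (space M - ({\<omega> \<in> space M. Y i \<omega> = Zero} \<union> {\<omega> \<in> space M. Y i \<omega> = One})) = 0"
      using prob_compl[of "{\<omega> \<in> space M. Y i \<omega> = Zero} \<union> {\<omega> \<in> space M. Y i \<omega> = One}"] evY by auto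
    moreover have "{\<omega> \<in> space M. Y i \<omega> = A} = space M - ({\<omega> \<in> space M. Y i \<omega> = Zero} \<union> {\<omega> \<in> space M. Y i \<omega> = One})"
      by (auto intro: letter.exhaust)
    ultimately show ?thesis using A by simp
  qed (use e0 e1 in auto)
  show ?thesis
  proof (cases n)
    case 0
    then show ?thesis by (simp add: E2_def EW_0 prob_space)
  next
    case (Suc n')
    define V where "V \<omega> = (map (\<lambda>i. X i \<omega>) [0..<n], map (\<lambda>i. Y i \<omega>) [0..<n])" for \<omega>
    define \<Omega> where "\<Omega> = LL n \<times> LL n"
    have finO: "finite \<Omega>" by (simp add: \<Omega>_def LL_finite)
    have VO: "V \<omega> \<in> \<Omega>" for \<omega> by (simp add: V_def \<Omega>_def LL_def)
    define ev where "ev v = {\<omega> \<in> space M. V \<omega> = v}" for v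
    define J :: "(nat + nat) set" where "J = Inl ` {..<n} \<union> Inr ` {..<n}"
    define val where "val v j = (case j of Inl i \<Rightarrow> fst v ! i | Inr i \<Rightarrow> snd v ! i)" for v :: "letter list \<times> letter list" and j
    define AA where "AA v j = Z j -` {val v j} \<inter> space M" for v j
    have JN: "J \<noteq> {}" "finite J" using Suc by (auto simp: J_def)
    have ev_eq: "ev v = (\<Inter>j\<in>J. AA v j)" if vO: "v \<in> \<Omega>" for v
    proof -
      obtain xs ys where v: "v = (xs, ys)" "length xs = n" "length ys = n" using vO by (cases v) (auto simp: \<Omega>_def LL_def)
      have "ev v = {\<omega> \<in> space M. (\<forall>i<n. X i \<omega> = xs ! i) \<and> (\<forall>i<n. Y i \<omega> = ys ! i)}"
        unfolding ev_def V_def v by (auto simp: list_eq_iff_nth_eq v)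
      also have "\<dots> = (\<Inter>j\<in>J. AA v j)"
      proof (rule set_eqI)
        fix \<omega>
        have i1: "\<omega> \<in> AA v (Inl i) \<longleftrightarrow> X i \<omega> = xs ! i \<and> \<omega> \<in> space M" for i
          by (simp add: AA_def Z_def val_def v)
        have i2: "\<omega> \<in> AA v (Inr i) \<longleftrightarrow> Y i \<omega> = ys ! i \<and> \<omega> \<in> space M" for i
          by (simp add: AA_def Z_def val_def v)
        have b: "(\<forall>j\<in>J. P j) \<longleftrightarrow> (\<forall>i<n. P (Inl i)) \<and> (\<forall>i<n. P (Inr i))" for P
          unfolding J_def by auto
        have "\<omega> \<in> (\<Inter>j\<in>J. AA v j) \<longleftrightarrow> (\<forall>j\<in>J. \<omega> \<in> AA v j)" by simp
        also have "\<dots> \<longleftrightarrow> (\<forall>i<n. \<omega> \<in> AA v (Inl i)) \<and> (\<forall>i<n. \<omega> \<in> AA v (Inr i))" by (rule b)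
        also have "\<dots> \<longleftrightarrow> (\<forall>i<n. X i \<omega> = xs ! i \<and> \<omega> \<in> space M) \<and> (\<forall>i<n. Y i \<omega> = ys ! i \<and> \<omega> \<in> space M)"
          by (simp only: i1 i2)
        also have "\<dots> \<longleftrightarrow> \<omega> \<in> space M \<and> (\<forall>i<n. X i \<omega> = xs ! i) \<and> (\<forall>i<n. Y i \<omega> = ys ! i)"
          using Suc by auto
        finally show "\<omega> \<in> {\<omega> \<in> space M. (\<forall>i<n. X i \<omega> = xs ! i) \<and> (\<forall>i<n. Y i \<omega> = ys ! i)} \<longleftrightarrow> \<omega> \<in> (\<Inter>j\<in>J. AA v j)"
          by simp
      qed
      finally show ?thesis .
    qed
    have AA_ev: "AA v j \<in> {Z j -` B \<inter> space M | B. B \<in> sets (count_space UNIV)}" for v j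
      unfolding AA_def by (rule CollectI, rule exI[where x="{val v j}"]) simp
    have indZ: "indep_sets (\<lambda>j. {Z j -` B \<inter> space M | B. B \<in> sets (count_space UNIV)}) UNIV"
      using ind unfolding indep_vars_def2 Z_def by simp
    have prob_ev: "prob (ev v) = prod_list (map (wx p) (fst v)) * prod_list (map wy (snd v))" if vO: "v \<in> \<Omega>" for v
    proof -
      obtain xs ys where v: "v = (xs, ys)" "length xs = n" "length ys = n" using vO by (cases v) (auto simp: \<Omega>_def LL_def)
      have "prob (ev v) = (\<Prod>j\<in>J. prob (AA v j))"
        unfolding ev_eq[OF vO] by (rule indep_setsD[OF indZ]) (use JN AA_ev in auto)
      also have "\<dots> = (\<Prod>j\<in>Inl ` {..<n}. prob (AA v j)) * (\<Prod>j\<in>Inr ` {..<n}. prob (AA v j))"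
        unfolding J_def by (rule prod.union_disjoint) auto
      also have "\<dots> = (\<Prod>i<n. prob (AA v (Inl i))) * (\<Prod>i<n. prob (AA v (Inr i)))"
        by (simp add: prod.reindex)
      also have "\<dots> = (\<Prod>i<n. wx p (xs ! i)) * (\<Prod>i<n. wy (ys ! i))"
      proof -
        have "AA v (Inl i) = {\<omega> \<in> space M. X i \<omega> = xs ! i}" for i by (auto simp: AA_def Z_def val_def v)
        moreover have "AA v (Inr i) = {\<omega> \<in> space M. Y i \<omega> = ys ! i}" for i by (auto simp: AA_def Z_def val_def v)
        ultimately show ?thesis by (simp add: pX pY)
      qed
      also have "\<dots> = prod_list (map (wx p) (fst v)) * prod_list (map wy (snd v))"
        by (simp add: prod_list_nth v)
      finally show ?thesis .
    qed
    have ev_sets: "ev v \<in> events" for v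
    proof -
      have "ev v = {}" if "v \<notin> \<Omega>" using that VO by (auto simp: ev_def)
      moreover have "(\<Inter>j\<in>J. AA v j) \<in> events"
        using JN by (intro sets.finite_INT) (auto simp: AA_def intro: measurable_sets[OF Zm])
      ultimately show ?thesis using ev_eq by (cases "v \<in> \<Omega>") auto
    qed
    have "(LINT \<omega>|M. f (map (\<lambda>i. X i \<omega>) [0..<n]) (map (\<lambda>i. Y i \<omega>) [0..<n])) =
          (LINT \<omega>|M. (\<Sum>v\<in>\<Omega>. case_prod f v * indicator (ev v) \<omega>))"
    proof (intro Bochner_Integration.integral_cong refl)
      fix \<omega> assume "\<omega> \<in> space M"
      then have "indicator (ev v) \<omega> = (if V \<omega> = v then 1 else (0::real))" for v
        by (auto simp: ev_def indicator_def)
      then have "(\<Sum>v\<in>\<Omega>. case_prod f v * indicator (ev v) \<omega>) = (\<Sum>v\<in>\<Omega>. if V \<omega> = v then case_prod f v else 0)"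
        by (intro sum.cong) auto
      also have "\<dots> = case_prod f (V \<omega>)" using finO VO by (simp add: sum.delta)
      finally show "f (map (\<lambda>i. X i \<omega>) [0..<n]) (map (\<lambda>i. Y i \<omega>) [0..<n]) = (\<Sum>v\<in>\<Omega>. case_prod f v * indicator (ev v) \<omega>)"
        by (simp add: V_def)
    qed
    also have "\<dots> = (\<Sum>v\<in>\<Omega>. LINT \<omega>|M. case_prod f v * indicator (ev v) \<omega>)"
    proof (rule Bochner_Integration.integral_sum)
      fix v
      have "integrable M (indicator (ev v) :: 'w \<Rightarrow> real)"
        using ev_sets[of v] by (intro integrable_real_indicator) (auto simp: less_top[symmetric])
      then show "integrable M (\<lambda>\<omega>. case_prod f v * indicator (ev v) \<omega>)" by simp
    qed
    also have "\<dots> = (\<Sum>v\<in>\<Omega>. case_prod f v * prob (ev v))"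
    proof (intro sum.cong refl)
      fix v
      have "ev v \<inter> space M = ev v" by (auto simp: ev_def)
      then show "(LINT \<omega>|M. case_prod f v * indicator (ev v) \<omega>) = case_prod f v * prob (ev v)"
        by (simp add: ev_sets)
    qed
    also have "\<dots> = (\<Sum>v\<in>\<Omega>. case_prod f v * (prod_list (map (wx p) (fst v)) * prod_list (map wy (snd v))))"
      by (intro sum.cong) (auto simp: prob_ev)
    also have "\<dots> = E2 p n n f"
      unfolding E2_def EW_def \<Omega>_def by (simp add: sum.cartesian_product sum_distrib_left algebra_simps case_prod_beta)
    finally show ?thesis .
  qed
qed


theorem theorem1:
  fixes M :: "'w measure" and p :: real
    and X Y :: "nat \<Rightarrow> 'w \<Rightarrow> letter"
  assumes "prob_space M"
    and "0 < p" and "p < 1"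
    and "\<And>i. X i \<in> measurable M (count_space UNIV)"
    and "\<And>i. Y i \<in> measurable M (count_space UNIV)"
    and "prob_space.indep_vars M (\<lambda>_. count_space UNIV)
           (\<lambda>j. case j of Inl i \<Rightarrow> X i | Inr i \<Rightarrow> Y i) UNIV"
    and "\<And>i. measure M {\<omega> \<in> space M. X i \<omega> = A} = p"
    and "\<And>i. measure M {\<omega> \<in> space M. X i \<omega> = Zero} = (1 - p) / 2"
    and "\<And>i. measure M {\<omega> \<in> space M. X i \<omega> = One} = (1 - p) / 2"
    and "\<And>i. measure M {\<omega> \<in> space M. Y i \<omega> = Zero} = 1 / 2"
    and "\<And>i. measure M {\<omega> \<in> space M. Y i \<omega> = One} = 1 / 2"
  shows "\<exists>k>0. \<forall>n::nat.
    (let L = (\<lambda>\<omega>. real (lcs_length (map (\<lambda>i. X i \<omega>) [0..<n]) (map (\<lambda>i. Y i \<omega>) [0..<n])))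
     in (LINT \<omega>|M. (L \<omega> - (LINT \<omega>|M. L \<omega>))\<^sup>2) \<ge> k * real n)"
proof (intro exI[of _ "p ^ 3 * (1 - p) / 4"] conjI allI)
  show "0 < p ^ 3 * (1 - p) / 4" using assms(2,3) by simp
  fix n :: nat
  note T = transfer_lemma[OF assms(1) assms(4) assms(5) assms(6) assms(7) assms(8) assms(9) assms(10) assms(11)]
  have mu: "(LINT \<omega>|M. real (lcs_length (map (\<lambda>i. X i \<omega>) [0..<n]) (map (\<lambda>i. Y i \<omega>) [0..<n]))) = E2 p n n Lr"
    using T[of "\<lambda>xs ys. real (lcs_length xs ys)" n] unfolding Lr_def by simp
  have var: "(LINT \<omega>|M. (real (lcs_length (map (\<lambda>i. X i \<omega>) [0..<n]) (map (\<lambda>i. Y i \<omega>) [0..<n])) - E2 p n n Lr)\<^sup>2)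
     = E2 p n n (\<lambda>xs ys. (Lr xs ys - E2 p n n Lr)\<^sup>2)"
    using T[of "\<lambda>xs ys. (real (lcs_length xs ys) - E2 p n n Lr)\<^sup>2" n] unfolding Lr_def by simp
  show "let L = (\<lambda>\<omega>. real (lcs_length (map (\<lambda>i. X i \<omega>) [0..<n]) (map (\<lambda>i. Y i \<omega>) [0..<n])))
     in (LINT \<omega>|M. (L \<omega> - (LINT \<omega>|M. L \<omega>))\<^sup>2) \<ge> p ^ 3 * (1 - p) / 4 * real n"
    unfolding Let_def mu var using finite_var[OF assms(2,3), of n] by simp
qed

end
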